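(* Let $m\in\{1,2\}$, $K>0$, $\gamma=3$, and let $(\rho,u)$ be a smooth solution ($\rho>0$, $r>0$) of the radially symmetric isentropic Euler equations $$(r^m\rho)_t+(r^m\rho u)_r=0,\qquad (r^m\rho u)_t+(r^m\rho u^2)_r+r^m p_r=0,\qquad p=K\rho^\gamma,$$ in the subsonic regime $c_1<0<c_2$. Then: (i) if the 1-wave is rarefaction (R), the 2-wave can only change from compression (C) to R; (ii) if the 1-wave is C, the 2-wave can only change from R to C; (iii) if the 2-wave is R, the 1-wave can only change from R to C; (iv) if the 2-wave is C, the 1-wave can only change from C to R.
   Context: Here $h=\sqrt{K\gamma}\,\rho^{(\gamma-1)/2}$, $c_1=u-h$, $c_2=u+h$, and $$\alpha=u_r+\tfrac{2}{\gamma-1}h_r+\tfrac{m}{r}\tfrac{hu}{c_2},\qquad \beta=u_r-\tfrac{2}{\gamma-1}h_r-\tfrac{m}{r}\tfrac{hu}{c_1}.$$ The 1-wave is rarefaction (compression) at a point if $\beta>0$ ($\beta<0$); the 2-wave is rarefaction (compression) if $\alpha>0$ ($\alpha<0$). Characteristic flow maps: $\partial_t\xi(r_0,t)=c_1(\xi(r_0,t),t)$, $\partial_t\psi(r_0,t)=c_2(\psi(r_0,t),t)$, $\xi(r_0,0)=\psi(r_0,0)=r_0$. A change of the 2-wave from R to C means there are $r_0,t^*,\varepsilon>0$ such that $g(t)=\alpha(\psi(r_0,t),t)$ satisfies $g(t^* )=0$, $g>0$ on $(t^*-\varepsilon,t^* )$, $g<0$ on $(t^*,t^*+\varepsilon)$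 (from C to R: opposite signs); a change of the 1-wave is defined likewise with $\beta(\xi(r_0,t),t)$. "If the 1-wave is R then the 2-wave can only change from C to R" means no R-to-C change of the 2-wave occurs at a time $t^*$ where the 1-wave is R at the crossing point; the other items are interpreted analogously. *)

theory Defs
  imports "HOL-Analysis.Analysis"
begin

text \<open>Functions of the two variables (r,t) are modelled as maps real \<times> real \<Rightarrow> real,
  the first component being r, the second t.\<close>

fun Ck_on :: "nat \<Rightarrow> (real \<times> real) set \<Rightarrow> (real \<times> real \<Rightarrow> real) \<Rightarrow> bool" where
  "Ck_on 0 S f = continuous_on S f"
| "Ck_on (Suc k) S f =
     (\<exists>fr ft. (\<forall>x\<in>S. (f has_derivative (\<lambda>v. fr x * fst v + ft x * snd v)) (at x))
             \<and> Ck_on k S fr \<and> Ck_on k S ft)"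

definition smooth_on2 :: "(real \<times> real) set \<Rightarrow> (real \<times> real \<Rightarrow> real) \<Rightarrow> bool" where
  "smooth_on2 S f \<longleftrightarrow> (\<forall>k. Ck_on k S f)"

definition d_r :: "(real \<times> real \<Rightarrow> real) \<Rightarrow> real \<times> real \<Rightarrow> real" where
  "d_r f x = deriv (\<lambda>s. f (s, snd x)) (fst x)"

definition d_t :: "(real \<times> real \<Rightarrow> real) \<Rightarrow> real \<times> real \<Rightarrow> real" where
  "d_t f x = deriv (\<lambda>s. f (fst x, s)) (snd x)"

definition euler_radial ::
  "nat \<Rightarrow> real \<Rightarrow> real \<Rightarrow> (real \<times> real) set \<Rightarrow> (real \<times> real \<Rightarrow> real) \<Rightarrow> (real \<times> real \<Rightarrow> real) \<Rightarrow> bool" where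
  "euler_radial m K \<gamma> \<Omega> \<rho> u \<longleftrightarrow>
     (\<forall>x\<in>\<Omega>.
        d_t (\<lambda>y. fst y ^ m * \<rho> y) x + d_r (\<lambda>y. fst y ^ m * \<rho> y * u y) x = 0
      \<and> d_t (\<lambda>y. fst y ^ m * \<rho> y * u y) x + d_r (\<lambda>y. fst y ^ m * \<rho> y * (u y)^2) x
          + fst x ^ m * d_r (\<lambda>y. K * \<rho> y powr \<gamma>) x = 0)"

definition hh :: "real \<Rightarrow> real \<Rightarrow> (real \<times> real \<Rightarrow> real) \<Rightarrow> real \<times> real \<Rightarrow> real" where
  "hh K \<gamma> \<rho> x = sqrt (K * \<gamma>) * \<rho> x powr ((\<gamma> - 1) / 2)"

definition c1 :: "real \<Rightarrow> real \<Rightarrow> (real \<times> real \<Rightarrow> real) \<Rightarrow> (real \<times> real \<Rightarrow> real) \<Rightarrow> real \<times> real \<Rightarrow> real" where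
  "c1 K \<gamma> \<rho> u x = u x - hh K \<gamma> \<rho> x"

definition c2 :: "real \<Rightarrow> real \<Rightarrow> (real \<times> real \<Rightarrow> real) \<Rightarrow> (real \<times> real \<Rightarrow> real) \<Rightarrow> real \<times> real \<Rightarrow> real" where
  "c2 K \<gamma> \<rho> u x = u x + hh K \<gamma> \<rho> x"

definition alpha :: "nat \<Rightarrow> real \<Rightarrow> real \<Rightarrow> (real \<times> real \<Rightarrow> real) \<Rightarrow> (real \<times> real \<Rightarrow> real) \<Rightarrow> real \<times> real \<Rightarrow> real" where
  "alpha m K \<gamma> \<rho> u x = d_r u x + 2 / (\<gamma> - 1) * d_r (hh K \<gamma> \<rho>) x
     + real m / fst x * (hh K \<gamma> \<rho> x * u x / c2 K \<gamma> \<rho> u x)"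

definition beta :: "nat \<Rightarrow> real \<Rightarrow> real \<Rightarrow> (real \<times> real \<Rightarrow> real) \<Rightarrow> (real \<times> real \<Rightarrow> real) \<Rightarrow> real \<times> real \<Rightarrow> real" where
  "beta m K \<gamma> \<rho> u x = d_r u x - 2 / (\<gamma> - 1) * d_r (hh K \<gamma> \<rho>) x
     - real m / fst x * (hh K \<gamma> \<rho> x * u x / c1 K \<gamma> \<rho> u x)"

definition char_curve :: "(real \<times> real) set \<Rightarrow> (real \<times> real \<Rightarrow> real) \<Rightarrow> real \<Rightarrow> real set \<Rightarrow> (real \<Rightarrow> real) \<Rightarrow> bool" where
  "char_curve \<Omega> c r0 I \<psi> \<longleftrightarrow> is_interval I \<and> 0 \<in> I \<and> \<psi> 0 = r0 \<and>
     (\<forall>t\<in>I. (\<psi> t, t) \<in> \<Omega> \<and> (\<psi> has_real_derivative c (\<psi> t, t)) (at t within I))"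

text \<open>g changes sign from positive (R) to negative (C) at t with witness eps, and conversely.\<close>
definition R_to_C :: "(real \<Rightarrow> real) \<Rightarrow> real \<Rightarrow> real \<Rightarrow> bool" where
  "R_to_C g t \<epsilon> \<longleftrightarrow> \<epsilon> > 0 \<and> g t = 0 \<and> (\<forall>s\<in>{t-\<epsilon><..<t}. g s > 0) \<and> (\<forall>s\<in>{t<..<t+\<epsilon>}. g s < 0)"

definition C_to_R :: "(real \<Rightarrow> real) \<Rightarrow> real \<Rightarrow> real \<Rightarrow> bool" where
  "C_to_R g t \<epsilon> \<longleftrightarrow> \<epsilon> > 0 \<and> g t = 0 \<and> (\<forall>s\<in>{t-\<epsilon><..<t}. g s < 0) \<and> (\<forall>s\<in>{t<..<t+\<epsilon>}. g s > 0)"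

end

theory Submission
  imports Defs
begin

lemma L_chain:
  fixes f :: "real \<times> real \<Rightarrow> real" and a b :: "real \<Rightarrow> real"
  assumes hf: "(f has_derivative (\<lambda>v. Fr * fst v + Ft * snd v)) (at (a t, b t))"
    and ha: "(a has_real_derivative a') (at t)" and hb: "(b has_real_derivative b') (at t)"
  shows "((\<lambda>s. f (a s, b s)) has_real_derivative Fr * a' + Ft * b') (at t)"
proof -
  have hp: "((\<lambda>s. (a s, b s)) has_derivative (\<lambda>h. (h * a', h * b'))) (at t)"
    using has_derivative_Pair[OF ha[unfolded has_field_derivative_def] hb[unfolded has_field_derivative_def]]
    by (simp add: mult.commute)
  have "((\<lambda>s. f (a s, b s)) has_derivative (\<lambda>h. Fr * fst (h * a', h * b') + Ft * snd (h * a', h * b'))) (at t)"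
    using has_derivative_compose[OF hp hf] by simp
  moreover have "(\<lambda>h. Fr * fst (h * a', h * b') + Ft * snd (h * a', h * b')) = (*) (Fr * a' + Ft * b')"
    by (auto simp: fun_eq_iff algebra_simps)
  ultimately show ?thesis unfolding has_field_derivative_def
    by simp
qed

lemma partial_r:
  assumes "(f has_derivative (\<lambda>v. fr * fst v + ft * snd v)) (at x)"
  shows "((\<lambda>s. f (s, snd x)) has_real_derivative fr) (at (fst x))"
  using L_chain[of f "fr" "ft" "\<lambda>s. s" "fst x" "\<lambda>s. snd x" 1 0] assms
  by (simp add: DERIV_ident)

lemma partial_t:
  assumes "(f has_derivative (\<lambda>v. fr * fst v + ft * snd v)) (at x)"
  shows "((\<lambda>s. f (fst x, s)) has_real_derivative ft) (at (snd x))"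
  using L_chain[of f "fr" "ft" "\<lambda>s. fst x" "snd x" "\<lambda>s. s" 0 1] assms
  by (simp add: DERIV_ident)

lemma d_r_eq:
  assumes "(f has_derivative (\<lambda>v. fr * fst v + ft * snd v)) (at x)"
  shows "d_r f x = fr"
  unfolding d_r_def using partial_r[OF assms] by (rule DERIV_imp_deriv)

lemma schwarz:
  fixes f fr ft frr frt ftr ftt :: "real \<times> real \<Rightarrow> real"
  assumes S: "open S" and x0: "x0 \<in> S"
    and df: "\<And>x. x \<in> S \<Longrightarrow> (f has_derivative (\<lambda>v. fr x * fst v + ft x * snd v)) (at x)"
    and dfr: "\<And>x. x \<in> S \<Longrightarrow> (fr has_derivative (\<lambda>v. frr x * fst v + frt x * snd v)) (at x)"
    and dft: "\<And>x. x \<in> S \<Longrightarrow> (ft has_derivative (\<lambda>v. ftr x * fst v + ftt x * snd v)) (at x)"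
    and c1: "continuous_on S frt" and c2: "continuous_on S ftr"
  shows "frt x0 = ftr x0"
proof (rule ccontr)
  assume ne: "frt x0 \<noteq> ftr x0"
  define d where "d = \<bar>frt x0 - ftr x0\<bar>"
  have d: "d > 0" using ne by (simp add: d_def)
  obtain e1 where e1: "e1 > 0" "ball x0 e1 \<subseteq> S" using S x0 open_contains_ball by blast
  have ic1: "isCont frt x0" using c1 S x0 continuous_on_eq_continuous_at by blast
  have ic2: "isCont ftr x0" using c2 S x0 continuous_on_eq_continuous_at by blast
  obtain e2 where e2: "e2 > 0" "\<forall>y. dist y x0 < e2 \<longrightarrow> dist (frt y) (frt x0) < d/2"
    using ic1[unfolded continuous_at_eps_delta] d by (metis half_gt_zero)
  obtain e3 where e3: "e3 > 0" "\<forall>y. dist y x0 < e3 \<longrightarrow> dist (ftr y) (ftr x0) < d/2"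
    using ic2[unfolded continuous_at_eps_delta] d by (metis half_gt_zero)
  define e where "e = min e1 (min e2 e3)"
  have e: "e > 0" using e1 e2 e3 by (simp add: e_def)
  obtain a b where x0ab: "x0 = (a, b)" by (cases x0)
  define h where "h = e / 3"
  have h: "h > 0" using e by (simp add: h_def)
  have inball: "dist (s, \<tau>) x0 < e" if "a \<le> s" "s \<le> a + h" "b \<le> \<tau>" "\<tau> \<le> b + h" for s \<tau>
  proof -
    have "dist (s, \<tau>) x0 = sqrt ((dist s a)\<^sup>2 + (dist \<tau> b)\<^sup>2)" by (simp add: x0ab dist_Pair_Pair)
    also have "\<dots> \<le> \<bar>dist s a\<bar> + \<bar>dist \<tau> b\<bar>" by (rule sqrt_sum_squares_le_sum_abs)
    also have "\<dots> \<le> 2 * h" using that by (simp add: dist_real_def)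
    also have "\<dots> < e" using e by (simp add: h_def)
    finally show ?thesis .
  qed
  have inS: "(s, \<tau>) \<in> S" if "a \<le> s" "s \<le> a + h" "b \<le> \<tau>" "\<tau> \<le> b + h" for s \<tau>
    using inball[OF that] e1 by (auto simp: e_def dist_commute)
  define \<Delta> where "\<Delta> = f (a+h, b+h) - f (a+h, b) - f (a, b+h) + f (a, b)"
  obtain \<xi> where \<xi>: "a < \<xi>" "\<xi> < a + h"
    "(f (a+h, b+h) - f (a+h, b)) - (f (a, b+h) - f (a, b)) = h * (fr (\<xi>, b+h) - fr (\<xi>, b))"
  proof -
    have "\<exists>z. a < z \<and> z < a + h \<and> (f (a+h, b+h) - f (a+h, b)) - (f (a, b+h) - f (a, b))
       = ((a+h) - a) * (fr (z, b+h) - fr (z, b))"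
    proof (rule MVT2[where f = "\<lambda>s. f (s, b+h) - f (s, b)"])
      show "a < a + h" using h by simp
      fix s assume "a \<le> s" "s \<le> a + h"
      then have "(s, b+h) \<in> S" "(s, b) \<in> S" using inS h by auto
      then show "((\<lambda>s. f (s, b+h) - f (s, b)) has_real_derivative fr (s, b+h) - fr (s, b)) (at s)"
        using partial_r[OF df[of "(s, b+h)"]] partial_r[OF df[of "(s, b)"]]
        by (auto intro!: DERIV_diff)
    qed
    then show ?thesis using that by auto
  qed
  obtain \<eta> where \<eta>: "b < \<eta>" "\<eta> < b + h" "fr (\<xi>, b+h) - fr (\<xi>, b) = h * frt (\<xi>, \<eta>)"
  proof -
    have "\<exists>z. b < z \<and> z < b + h \<and> fr (\<xi>, b+h) - fr (\<xi>, b) = ((b+h) - b) * frt (\<xi>, z)"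
    proof (rule MVT2[where f = "\<lambda>\<tau>. fr (\<xi>, \<tau>)"])
      show "b < b + h" using h by simp
      fix \<tau> assume "b \<le> \<tau>" "\<tau> \<le> b + h"
      then have "(\<xi>, \<tau>) \<in> S" using inS \<xi> by auto
      then show "((\<lambda>\<tau>. fr (\<xi>, \<tau>)) has_real_derivative frt (\<xi>, \<tau>)) (at \<tau>)"
        using partial_t[OF dfr[of "(\<xi>, \<tau>)"]] by auto
    qed
    then show ?thesis using that by auto
  qed
  obtain \<eta>' where \<eta>': "b < \<eta>'" "\<eta>' < b + h"
    "(f (a+h, b+h) - f (a, b+h)) - (f (a+h, b) - f (a, b)) = h * (ft (a+h, \<eta>') - ft (a, \<eta>'))"
  proof -
    have "\<exists>z. b < z \<and> z < b + h \<and> (f (a+h, b+h) - f (a, b+h)) - (f (a+h, b) - f (a, b))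
       = ((b+h) - b) * (ft (a+h, z) - ft (a, z))"
    proof (rule MVT2[where f = "\<lambda>\<tau>. f (a+h, \<tau>) - f (a, \<tau>)"])
      show "b < b + h" using h by simp
      fix \<tau> assume "b \<le> \<tau>" "\<tau> \<le> b + h"
      then have "(a+h, \<tau>) \<in> S" "(a, \<tau>) \<in> S" using inS h by auto
      then show "((\<lambda>\<tau>. f (a+h, \<tau>) - f (a, \<tau>)) has_real_derivative ft (a+h, \<tau>) - ft (a, \<tau>)) (at \<tau>)"
        using partial_t[OF df[of "(a+h, \<tau>)"]] partial_t[OF df[of "(a, \<tau>)"]]
        by (auto intro!: DERIV_diff)
    qed
    then show ?thesis using that by auto
  qed
  obtain \<xi>' where \<xi>': "a < \<xi>'" "\<xi>' < a + h" "ft (a+h, \<eta>') - ft (a, \<eta>') = h * ftr (\<xi>', \<eta>')"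
  proof -
    have "\<exists>z. a < z \<and> z < a + h \<and> ft (a+h, \<eta>') - ft (a, \<eta>') = ((a+h) - a) * ftr (z, \<eta>')"
    proof (rule MVT2[where f = "\<lambda>s. ft (s, \<eta>')"])
      show "a < a + h" using h by simp
      fix s assume "a \<le> s" "s \<le> a + h"
      then have "(s, \<eta>') \<in> S" using inS \<eta>' by auto
      then show "((\<lambda>s. ft (s, \<eta>')) has_real_derivative ftr (s, \<eta>')) (at s)"
        using partial_r[OF dft[of "(s, \<eta>')"]] by auto
    qed
    then show ?thesis using that by auto
  qed
  have "h * (h * frt (\<xi>, \<eta>)) = h * (h * ftr (\<xi>', \<eta>'))"
    using \<xi>(3) \<eta>(3) \<eta>'(3) \<xi>'(3) by (simp add: algebra_simps)
  then have eq: "frt (\<xi>, \<eta>) = ftr (\<xi>', \<eta>')" using h by simp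
  have "dist (\<xi>, \<eta>) x0 < e" using inball \<xi> \<eta> by auto
  then have A1: "\<bar>frt (\<xi>, \<eta>) - frt x0\<bar> < d/2" using e2 by (auto simp: e_def dist_real_def)
  have "dist (\<xi>', \<eta>') x0 < e" using inball \<xi>' \<eta>' by auto
  then have A2: "\<bar>ftr (\<xi>', \<eta>') - ftr x0\<bar> < d/2" using e3 by (auto simp: e_def dist_real_def)
  show False using A1 A2 eq d_def by linarith
qed


lemma Ck2_unfold:
  assumes "Ck_on (Suc (Suc 0)) S f"
  shows "\<exists>fr ft. (\<forall>x\<in>S. (f has_derivative (\<lambda>v. fr x * fst v + ft x * snd v)) (at x)) \<and> Ck_on (Suc 0) S fr \<and> Ck_on (Suc 0) S ft"
  using assms by (simp only: Ck_on.simps(2))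

lemma Ck1_unfold:
  assumes "Ck_on (Suc 0) S f"
  shows "\<exists>fr ft. (\<forall>x\<in>S. (f has_derivative (\<lambda>v. fr x * fst v + ft x * snd v)) (at x)) \<and> continuous_on S fr \<and> continuous_on S ft"
  using assms by (simp only: Ck_on.simps)

lemma smooth_extract:
  assumes "smooth_on2 S f"
  obtains fr ft frr frt ftr ftt where
   "\<forall>x\<in>S. (f has_derivative (\<lambda>v. fr x * fst v + ft x * snd v)) (at x)"
   "\<forall>x\<in>S. (fr has_derivative (\<lambda>v. frr x * fst v + frt x * snd v)) (at x)"
   "\<forall>x\<in>S. (ft has_derivative (\<lambda>v. ftr x * fst v + ftt x * snd v)) (at x)"
   "continuous_on S frt" "continuous_on S ftr"
proof -
  have "Ck_on (Suc (Suc 0)) S f" using assms unfolding smooth_on2_def by blast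
  from Ck2_unfold[OF this] obtain fr ft where h1: "\<forall>x\<in>S. (f has_derivative (\<lambda>v. fr x * fst v + ft x * snd v)) (at x)"
    and h2: "Ck_on (Suc 0) S fr" and h3: "Ck_on (Suc 0) S ft"
    by blast
  from Ck1_unfold[OF h2] obtain frr frt where h4: "\<forall>x\<in>S. (fr has_derivative (\<lambda>v. frr x * fst v + frt x * snd v)) (at x)"
    and h5: "continuous_on S frt"
    by blast
  from Ck1_unfold[OF h3] obtain ftr ftt where h6: "\<forall>x\<in>S. (ft has_derivative (\<lambda>v. ftr x * fst v + ftt x * snd v)) (at x)"
    and h7: "continuous_on S ftr"
    by blast
  show ?thesis by (rule that[OF h1 h4 h6 h5 h7])
qed

lemma smooth_extract2:
  assumes "smooth_on2 S f" "open S"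
  obtains fr ft frr frt ftr ftt where
   "\<forall>x\<in>S. (f has_derivative (\<lambda>v. fr x * fst v + ft x * snd v)) (at x)"
   "\<forall>x\<in>S. (fr has_derivative (\<lambda>v. frr x * fst v + frt x * snd v)) (at x)"
   "\<forall>x\<in>S. (ft has_derivative (\<lambda>v. ftr x * fst v + ftt x * snd v)) (at x)"
   "\<forall>x\<in>S. frt x = ftr x"
proof -
  obtain fr ft frr frt ftr ftt where h:
   "\<forall>x\<in>S. (f has_derivative (\<lambda>v. fr x * fst v + ft x * snd v)) (at x)"
   "\<forall>x\<in>S. (fr has_derivative (\<lambda>v. frr x * fst v + frt x * snd v)) (at x)"
   "\<forall>x\<in>S. (ft has_derivative (\<lambda>v. ftr x * fst v + ftt x * snd v)) (at x)"
   "continuous_on S frt" "continuous_on S ftr"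
    by (rule smooth_extract[OF assms(1)])
  have "\<forall>x\<in>S. frt x = ftr x"
  proof
    fix x assume x: "x \<in> S"
    show "frt x = ftr x"
    proof (rule schwarz[OF assms(2) x _ _ _ h(4) h(5)])
      show "\<And>x. x \<in> S \<Longrightarrow> (f has_derivative (\<lambda>v. fr x * fst v + ft x * snd v)) (at x)" using h(1) by blast
      show "\<And>x. x \<in> S \<Longrightarrow> (fr has_derivative (\<lambda>v. frr x * fst v + frt x * snd v)) (at x)" using h(2) by blast
      show "\<And>x. x \<in> S \<Longrightarrow> (ft has_derivative (\<lambda>v. ftr x * fst v + ftt x * snd v)) (at x)" using h(3) by blast
    qed
  qed
  then show ?thesis using that h(1-3) by blast
qed


lemma pde_nc:
  fixes \<rho> u \<rho>r \<rho>t ur ut :: "real \<times> real \<Rightarrow> real"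
  assumes hm: "m \<ge> 1" and x: "x \<in> \<Omega>" and hr: "fst x > 0" and hrho: "\<rho> x > 0"
   and dp: "(\<rho> has_derivative (\<lambda>v. \<rho>r x * fst v + \<rho>t x * snd v)) (at x)"
   and du: "(u has_derivative (\<lambda>v. ur x * fst v + ut x * snd v)) (at x)"
   and heq: "euler_radial m K 3 \<Omega> \<rho> u"
  shows "\<rho>t x + u x*\<rho>r x + \<rho> x*ur x + real m*\<rho> x*u x/fst x = 0 \<and> ut x + u x*ur x + 3*K*\<rho> x*\<rho>r x = 0"
proof -
  obtain k where mk: "m = Suc k" using hm by (cases m) auto
  note Pr = partial_r[OF dp] and Pt = partial_t[OF dp] and Ur = partial_r[OF du] and Ut = partial_t[OF du]
  have pk: "\<And>y::real. 0 < k \<Longrightarrow> y * y ^ (k - Suc 0) = y ^ k" by (case_tac k) auto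
  have d1: "d_t (\<lambda>y. fst y ^ m * \<rho> y) x = fst x ^ m * \<rho>t x"
  proof -
    have "d_t (\<lambda>y. fst y ^ m * \<rho> y) x = deriv (\<lambda>s. fst x ^ m * \<rho> (fst x, s)) (snd x)" by (simp add: d_t_def)
    also have "\<dots> = fst x ^ m * \<rho>t x"
      by (rule DERIV_imp_deriv) (auto intro!: derivative_eq_intros Pt)
    finally show ?thesis .
  qed
  have d2: "d_r (\<lambda>y. fst y ^ m * \<rho> y * u y) x
      = real (Suc k) * fst x ^ k * \<rho> x * u x + fst x ^ Suc k * (\<rho>r x * u x + \<rho> x * ur x)"
  proof -
    have "d_r (\<lambda>y. fst y ^ m * \<rho> y * u y) x = deriv (\<lambda>s. s ^ Suc k * \<rho> (s, snd x) * u (s, snd x)) (fst x)" by (simp add: d_r_def mk)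
    also have "\<dots> = real (Suc k) * fst x ^ k * \<rho> x * u x + fst x ^ Suc k * (\<rho>r x * u x + \<rho> x * ur x)"
      by (rule DERIV_imp_deriv) (auto intro!: derivative_eq_intros Pr Ur simp: algebra_simps pk)
    finally show ?thesis .
  qed
  have d3: "d_t (\<lambda>y. fst y ^ m * \<rho> y * u y) x = fst x ^ m * (\<rho>t x * u x + \<rho> x * ut x)"
  proof -
    have "d_t (\<lambda>y. fst y ^ m * \<rho> y * u y) x = deriv (\<lambda>s. fst x ^ m * \<rho> (fst x, s) * u (fst x, s)) (snd x)" by (simp add: d_t_def)
    also have "\<dots> = fst x ^ m * (\<rho>t x * u x + \<rho> x * ut x)"
      by (rule DERIV_imp_deriv) (auto intro!: derivative_eq_intros Pt Ut simp: algebra_simps)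
    finally show ?thesis .
  qed
  have d4: "d_r (\<lambda>y. fst y ^ m * \<rho> y * (u y)\<^sup>2) x
      = real (Suc k) * fst x ^ k * \<rho> x * (u x)\<^sup>2 + fst x ^ Suc k * (\<rho>r x * (u x)\<^sup>2 + \<rho> x * (2 * u x * ur x))"
  proof -
    have "d_r (\<lambda>y. fst y ^ m * \<rho> y * (u y)\<^sup>2) x = deriv (\<lambda>s. s ^ Suc k * \<rho> (s, snd x) * (u (s, snd x))\<^sup>2) (fst x)" by (simp add: d_r_def mk)
    also have "\<dots> = real (Suc k) * fst x ^ k * \<rho> x * (u x)\<^sup>2 + fst x ^ Suc k * (\<rho>r x * (u x)\<^sup>2 + \<rho> x * (2 * u x * ur x))"
      by (rule DERIV_imp_deriv) (auto intro!: derivative_eq_intros Pr Ur simp: algebra_simps power2_eq_square pk)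
    finally show ?thesis .
  qed
  have d5: "d_r (\<lambda>y. K * \<rho> y powr 3) x = K * (3 * (\<rho> x)\<^sup>2 * \<rho>r x)"
  proof -
    have "d_r (\<lambda>y. K * \<rho> y powr 3) x = deriv (\<lambda>s. K * \<rho> (s, snd x) powr 3) (fst x)" by (simp add: d_r_def)
    also have "\<dots> = K * (3 * (\<rho> x)\<^sup>2 * \<rho>r x)"
    proof (rule DERIV_imp_deriv)
      have "((\<lambda>s. \<rho> (s, snd x) powr 3) has_real_derivative 3 * (\<rho> (fst x, snd x)) powr (3 - of_nat 1) * \<rho>r x) (at (fst x))"
        by (rule DERIV_fun_powr[OF Pr]) (simp add: hrho)
      then have "((\<lambda>s. \<rho> (s, snd x) powr 3) has_real_derivative 3 * (\<rho> x)\<^sup>2 * \<rho>r x) (at (fst x))"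
        using hrho by simp
      then show "((\<lambda>s. K * \<rho> (s, snd x) powr 3) has_real_derivative K * (3 * (\<rho> x)\<^sup>2 * \<rho>r x)) (at (fst x))"
        by (rule DERIV_cmult)
    qed
    finally show ?thesis .
  qed
  have e: "d_t (\<lambda>y. fst y ^ m * \<rho> y) x + d_r (\<lambda>y. fst y ^ m * \<rho> y * u y) x = 0"
     "d_t (\<lambda>y. fst y ^ m * \<rho> y * u y) x + d_r (\<lambda>y. fst y ^ m * \<rho> y * (u y)^2) x
          + fst x ^ m * d_r (\<lambda>y. K * \<rho> y powr 3) x = 0"
    using heq x unfolding euler_radial_def by auto
  define r where "r = fst x"
  have r: "r > 0" using hr r_def by simp
  have rk: "r ^ k > 0" using r by simp
  have raw1: "r ^ k * (r * \<rho>t x + real (Suc k) * \<rho> x * u x + r * (\<rho>r x * u x + \<rho> x * ur x)) = 0"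
    using e(1)[unfolded d1 d2] unfolding mk r_def[symmetric] by (simp add: algebra_simps)
  then have "r * \<rho>t x + real (Suc k) * \<rho> x * u x + r * (\<rho>r x * u x + \<rho> x * ur x) = 0" using rk r by simp
  then have E1: "\<rho>t x + u x*\<rho>r x + \<rho> x*ur x + real m*\<rho> x*u x/r = 0"
    using r unfolding mk by (simp add: field_simps)
  have raw2: "r ^ k * (r * (\<rho>t x * u x + \<rho> x * ut x) + real (Suc k) * \<rho> x * (u x)\<^sup>2
      + r * (\<rho>r x * (u x)\<^sup>2 + \<rho> x * (2 * u x * ur x)) + r * (K * (3 * (\<rho> x)\<^sup>2 * \<rho>r x))) = 0"
    using e(2)[unfolded d3 d4 d5] unfolding mk r_def[symmetric] by (simp add: algebra_simps)
  then have "r * (\<rho>t x * u x + \<rho> x * ut x) + real (Suc k) * \<rho> x * (u x)\<^sup>2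
      + r * (\<rho>r x * (u x)\<^sup>2 + \<rho> x * (2 * u x * ur x)) + r * (K * (3 * (\<rho> x)\<^sup>2 * \<rho>r x)) = 0" using rk r by simp
  then have "(\<rho>t x * u x + \<rho> x * ut x) + real m * \<rho> x * (u x)\<^sup>2 / r
      + (\<rho>r x * (u x)\<^sup>2 + \<rho> x * (2 * u x * ur x)) + (K * (3 * (\<rho> x)\<^sup>2 * \<rho>r x)) = 0"
    using r unfolding mk by (simp add: field_simps)
  then have "\<rho> x * (ut x + u x*ur x + 3*K*\<rho> x*\<rho>r x) + u x * (\<rho>t x + u x*\<rho>r x + \<rho> x*ur x + real m*\<rho> x*u x/r) = 0"
    by (simp add: algebra_simps power2_eq_square)
  then have "\<rho> x * (ut x + u x*ur x + 3*K*\<rho> x*\<rho>r x) = 0" using E1 by simp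
  then have E2: "ut x + u x*ur x + 3*K*\<rho> x*\<rho>r x = 0" using hrho by simp
  show ?thesis using E1 E2 r_def by simp
qed


lemma key_alg:
  fixes m r c \<rho> u \<rho>r ur \<rho>t ut \<rho>rr urr \<rho>rt urt :: real
  assumes r: "r > 0" and p0: "u + c*\<rho> \<noteq> 0" and q0: "u - c*\<rho> \<noteq> 0"
  and E1: "\<rho>t + u*\<rho>r + \<rho>*ur + m*\<rho>*u/r = 0"
  and E2: "ut + u*ur + c^2*\<rho>*\<rho>r = 0"
  and E1r: "\<rho>rt + ur*\<rho>r + u*\<rho>rr + \<rho>r*ur + \<rho>*urr + m*((\<rho>r*u + \<rho>*ur)*r - \<rho>*u)/r^2 = 0"
  and E2r: "urt + ur*ur + u*urr + c^2*(\<rho>r*\<rho>r + \<rho>*\<rho>rr) = 0"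
  and A: "ur + c*\<rho>r + m/r*(c*\<rho>*u/(u+c*\<rho>)) = 0"
  shows "(urr*(u+c*\<rho>) + urt*1) + c*(\<rho>rr*(u+c*\<rho>) + \<rho>rt*1)
     + ((0*r - m*(u+c*\<rho>))/(r*r) * (c*\<rho>*u/(u+c*\<rho>))
     + m/r * (((c*(\<rho>r*(u+c*\<rho>)+\<rho>t*1)*u + c*\<rho>*(ur*(u+c*\<rho>)+ut*1))*(u+c*\<rho>)
          - c*\<rho>*u*((ur*(u+c*\<rho>)+ut*1) + c*(\<rho>r*(u+c*\<rho>)+\<rho>t*1)))/((u+c*\<rho>)*(u+c*\<rho>))))
   = m*(u-c*\<rho>)^2*(ur - c*\<rho>r - m/r*(c*\<rho>*u/(u-c*\<rho>)))/(2*r*(u+c*\<rho>))"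
proof -
  define X where "X = 1/(u+c*\<rho>)"
  define Y where "Y = 1/(u-c*\<rho>)"
  define R where "R = 1/r"
  have X: "(u+c*\<rho>)*X = 1" using p0 by (simp add: X_def)
  have Y: "(u-c*\<rho>)*Y = 1" using q0 by (simp add: Y_def)
  have R: "r*R = 1" using r by (simp add: R_def)
  have e: "\<And>a. a/(u+c*\<rho>) = a*X" "\<And>a. a/(u-c*\<rho>) = a*Y" "\<And>a. a/r = a*R"
     "\<And>a. a/r^2 = a*R^2" "\<And>a. a/((u+c*\<rho>)*(u+c*\<rho>)) = a*X^2" "\<And>a. a/(2*r*(u+c*\<rho>)) = a*R*X/2"
     "\<And>a. a/(r*r) = a*R^2"
    by (simp_all add: X_def Y_def R_def power2_eq_square)
  have ur: "ur = - c*\<rho>r - m*c*\<rho>*u*R*X" using A unfolding e by (simp add: algebra_simps)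
  have \<rho>t: "\<rho>t = - u*\<rho>r - \<rho>*ur - m*\<rho>*u*R" using E1 unfolding e by simp
  have ut: "ut = - u*ur - c^2*\<rho>*\<rho>r" using E2 by simp
  have \<rho>rt: "\<rho>rt = -( ur*\<rho>r + u*\<rho>rr + \<rho>r*ur + \<rho>*urr + m*((\<rho>r*u + \<rho>*ur)*r - \<rho>*u)*R^2)" using E1r unfolding e by simp
  have urt: "urt = -(ur*ur + u*urr + c^2*(\<rho>r*\<rho>r + \<rho>*\<rho>rr))" using E2r by simp
  show ?thesis unfolding e unfolding urt \<rho>rt ut \<rho>t unfolding ur using X Y R
    by algebra
qed

lemma helper:
  fixes p T A B c u \<rho> m :: real
  assumes "p \<noteq> 0" "T \<noteq> 0"
  shows "((A * c * u + B * (c * \<rho>)) * m * (T * p) - m * (c * \<rho> * u) * (p * p + (B + A * c) * T)) / (T * p * (T * p))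
   = m * ((c * A * u + c * \<rho> * B) * p - c * \<rho> * u * (B + c * A)) / (T * (p * p)) - m * (c * (\<rho> * u)) / (T * T)"
  using assms by (simp add: field_simps)

lemma core:
  fixes m :: nat and K c t \<epsilon> :: real and \<Omega> :: "(real \<times> real) set"
    and \<rho> u :: "real \<times> real \<Rightarrow> real" and \<psi> :: "real \<Rightarrow> real"
  assumes hm: "m \<ge> 1" and hopen: "open \<Omega>" and hr: "\<forall>x\<in>\<Omega>. fst x > 0" and hrho: "\<forall>x\<in>\<Omega>. \<rho> x > 0"
    and hs1: "smooth_on2 \<Omega> \<rho>" and hs2: "smooth_on2 \<Omega> u" and heq: "euler_radial m K 3 \<Omega> \<rho> u"
    and hc: "c^2 = 3*K"
    and hne: "\<forall>x\<in>\<Omega>. u x + c*\<rho> x \<noteq> 0 \<and> u x - c*\<rho> x \<noteq> 0"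
    and he: "\<epsilon> > 0" and hcurve: "\<forall>s\<in>{t-\<epsilon><..<t+\<epsilon>}. (\<psi> s, s) \<in> \<Omega>"
    and hpsi: "(\<psi> has_real_derivative (u (\<psi> t, t) + c*\<rho> (\<psi> t, t))) (at t)"
    and A0: "d_r u (\<psi> t, t) + c*d_r \<rho> (\<psi> t, t) + real m/\<psi> t*(c*\<rho>(\<psi> t,t)*u(\<psi> t,t)/(u(\<psi> t,t)+c*\<rho>(\<psi> t,t))) = 0"
  shows "((\<lambda>s. d_r u (\<psi> s,s) + c*d_r \<rho> (\<psi> s,s) + real m/\<psi> s*(c*\<rho>(\<psi> s,s)*u(\<psi> s,s)/(u(\<psi> s,s)+c*\<rho>(\<psi> s,s)))) has_real_derivative
     real m*(u (\<psi> t,t) - c*\<rho> (\<psi> t,t))^2*(d_r u (\<psi> t,t) - c*d_r \<rho> (\<psi> t,t) - real m/\<psi> t*(c*\<rho> (\<psi> t,t)*u (\<psi> t,t)/(u (\<psi> t,t) - c*\<rho> (\<psi> t,t))))/(2*\<psi> t*(u (\<psi> t,t) + c*\<rho> (\<psi> t,t)))) (at t)"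
proof -
  obtain \<rho>r \<rho>t \<rho>rr \<rho>rt \<rho>tr \<rho>tt where
    P1: "\<forall>x\<in>\<Omega>. (\<rho> has_derivative (\<lambda>v. \<rho>r x * fst v + \<rho>t x * snd v)) (at x)" and
    P2: "\<forall>x\<in>\<Omega>. (\<rho>r has_derivative (\<lambda>v. \<rho>rr x * fst v + \<rho>rt x * snd v)) (at x)" and
    P3: "\<forall>x\<in>\<Omega>. (\<rho>t has_derivative (\<lambda>v. \<rho>tr x * fst v + \<rho>tt x * snd v)) (at x)" and
    P4: "\<forall>x\<in>\<Omega>. \<rho>rt x = \<rho>tr x"
    by (rule smooth_extract2[OF hs1 hopen])
  obtain ur ut urr urt utr utt where
    U1: "\<forall>x\<in>\<Omega>. (u has_derivative (\<lambda>v. ur x * fst v + ut x * snd v)) (at x)" and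
    U2: "\<forall>x\<in>\<Omega>. (ur has_derivative (\<lambda>v. urr x * fst v + urt x * snd v)) (at x)" and
    U3: "\<forall>x\<in>\<Omega>. (ut has_derivative (\<lambda>v. utr x * fst v + utt x * snd v)) (at x)" and
    U4: "\<forall>x\<in>\<Omega>. urt x = utr x"
    by (rule smooth_extract2[OF hs2 hopen])
  have E: "\<rho>t x + u x*\<rho>r x + \<rho> x*ur x + real m*\<rho> x*u x/fst x = 0 \<and> ut x + u x*ur x + 3*K*\<rho> x*\<rho>r x = 0"
    if "x \<in> \<Omega>" for x
    using pde_nc[OF hm that _ _ _ _ heq] that hr hrho P1 U1 by blast
  define x0 where "x0 = (\<psi> t, t)"
  have x0: "x0 \<in> \<Omega>" using hcurve he by (auto simp: x0_def)
  define r where "r = \<psi> t"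
  have r: "r > 0" using hr x0 by (auto simp: x0_def r_def)
  define U where "U = (\<lambda>s. (s, t)) -` \<Omega>"
  have Uo: "open U" unfolding U_def by (rule open_vimage[OF hopen]) (intro continuous_intros)
  have rU: "r \<in> U" using x0 by (simp add: U_def x0_def r_def)
  have pr: "\<And>f fr ft. (f has_derivative (\<lambda>v. fr * fst v + ft * snd v)) (at x0) \<Longrightarrow> ((\<lambda>s. f (s, t)) has_real_derivative fr) (at r)"
    using partial_r unfolding x0_def r_def by fastforce
  note pr1 = pr[OF P1[rule_format, OF x0]] and pr2 = pr[OF P2[rule_format, OF x0]]
    and pr3 = pr[OF P3[rule_format, OF x0]] and pr4 = pr[OF U1[rule_format, OF x0]]
    and pr5 = pr[OF U2[rule_format, OF x0]] and pr6 = pr[OF U3[rule_format, OF x0]]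
  have x0r: "(r, t) = x0" by (simp add: x0_def r_def)
  have E1r: "\<rho>tr x0 + ur x0*\<rho>r x0 + u x0*\<rho>rr x0 + \<rho>r x0*ur x0 + \<rho> x0*urr x0
      + real m*((\<rho>r x0*u x0 + \<rho> x0*ur x0)*r - \<rho> x0*u x0)/r^2 = 0"
  proof -
    have d: "((\<lambda>s. \<rho>t (s,t) + u (s,t)*\<rho>r (s,t) + \<rho> (s,t)*ur (s,t) + real m*\<rho> (s,t)*u (s,t)/s) has_real_derivative
       \<rho>tr x0 + ur x0*\<rho>r x0 + u x0*\<rho>rr x0 + \<rho>r x0*ur x0 + \<rho> x0*urr x0
      + real m*((\<rho>r x0*u x0 + \<rho> x0*ur x0)*r - \<rho> x0*u x0)/r^2) (at r)"
      using r by (auto intro!: derivative_eq_intros pr1 pr2 pr3 pr4 pr5 pr6 simp: x0r field_simps power2_eq_square)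
    have "((\<lambda>s. \<rho>t (s,t) + u (s,t)*\<rho>r (s,t) + \<rho> (s,t)*ur (s,t) + real m*\<rho> (s,t)*u (s,t)/s) has_real_derivative 0) (at r)"
    proof (rule has_field_derivative_transform_within_open[OF DERIV_const Uo rU])
      fix s assume "s \<in> U"
      then have "(s,t) \<in> \<Omega>" by (simp add: U_def)
      then show "0 = \<rho>t (s,t) + u (s,t)*\<rho>r (s,t) + \<rho> (s,t)*ur (s,t) + real m*\<rho> (s,t)*u (s,t)/s"
        using E[of "(s,t)"] by simp
    qed
    then show ?thesis using DERIV_unique[OF d] by simp
  qed
  have E2r: "utr x0 + ur x0*ur x0 + u x0*urr x0 + c^2*(\<rho>r x0*\<rho>r x0 + \<rho> x0*\<rho>rr x0) = 0"
  proof -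
    have d: "((\<lambda>s. ut (s,t) + u (s,t)*ur (s,t) + c^2*\<rho> (s,t)*\<rho>r (s,t)) has_real_derivative
       utr x0 + ur x0*ur x0 + u x0*urr x0 + c^2*(\<rho>r x0*\<rho>r x0 + \<rho> x0*\<rho>rr x0)) (at r)"
      by (auto intro!: derivative_eq_intros pr1 pr2 pr3 pr4 pr5 pr6 simp: x0r algebra_simps)
    have "((\<lambda>s. ut (s,t) + u (s,t)*ur (s,t) + c^2*\<rho> (s,t)*\<rho>r (s,t)) has_real_derivative 0) (at r)"
    proof (rule has_field_derivative_transform_within_open[OF DERIV_const Uo rU])
      fix s assume "s \<in> U"
      then have "(s,t) \<in> \<Omega>" by (simp add: U_def)
      then show "0 = ut (s,t) + u (s,t)*ur (s,t) + c^2*\<rho> (s,t)*\<rho>r (s,t)"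
        using E[of "(s,t)"] hc by simp
    qed
    then show ?thesis using DERIV_unique[OF d] by simp
  qed
  define p where "p = u x0 + c*\<rho> x0"
  have p0: "p \<noteq> 0" and q0: "u x0 - c*\<rho> x0 \<noteq> 0" using hne x0 by (auto simp: p_def)
  have dpsi: "(\<psi> has_real_derivative p) (at t)" using hpsi by (simp add: p_def x0_def)
  have ch: "\<And>f Fr Ft. (f has_derivative (\<lambda>v. Fr * fst v + Ft * snd v)) (at x0) \<Longrightarrow>
      ((\<lambda>s. f (\<psi> s, s)) has_real_derivative Fr * p + Ft * 1) (at t)"
    using L_chain[OF _ dpsi DERIV_ident] unfolding x0_def by blast
  note c1 = ch[OF U2[rule_format, OF x0]] and c2 = ch[OF P2[rule_format, OF x0]]
    and c3 = ch[OF P1[rule_format, OF x0]] and c4 = ch[OF U1[rule_format, OF x0]]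
  have px0: "(\<psi> t, t) = x0" by (simp add: x0_def)
  have psit: "\<psi> t \<noteq> 0" using r r_def by simp
  have dg1: "((\<lambda>s. ur (\<psi> s,s) + c*\<rho>r (\<psi> s,s) + real m/\<psi> s*(c*\<rho>(\<psi> s,s)*u(\<psi> s,s)/(u(\<psi> s,s)+c*\<rho>(\<psi> s,s)))) has_real_derivative
     (urr x0*p + urt x0*1) + c*(\<rho>rr x0*p + \<rho>rt x0*1)
     + ((0*\<psi> t - real m*p)/(\<psi> t*\<psi> t) * (c*\<rho> x0*u x0/p)
     + real m/\<psi> t * (((c*(\<rho>r x0*p+\<rho>t x0*1)*u x0 + c*\<rho> x0*(ur x0*p+ut x0*1))*p
          - c*\<rho> x0*u x0*((ur x0*p+ut x0*1) + c*(\<rho>r x0*p+\<rho>t x0*1)))/(p*p)))) (at t)"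
    using p0 psit
    apply (auto intro!: derivative_eq_intros c1 c2 c3 c4 dpsi simp: px0 p_def[symmetric])
    by (rule helper[OF p0 psit])
  have dru: "\<And>y. y \<in> \<Omega> \<Longrightarrow> d_r u y = ur y" using U1 d_r_eq by blast
  have drp: "\<And>y. y \<in> \<Omega> \<Longrightarrow> d_r \<rho> y = \<rho>r y" using P1 d_r_eq by blast
  have A0': "ur x0 + c*\<rho>r x0 + real m/\<psi> t*(c*\<rho> x0*u x0/(u x0+c*\<rho> x0)) = 0"
    using A0 dru[OF x0] drp[OF x0] by (simp add: x0_def)
  have Ex0: "\<rho>t x0 + u x0*\<rho>r x0 + \<rho> x0*ur x0 + real m*\<rho> x0*u x0/\<psi> t = 0"
     "ut x0 + u x0*ur x0 + c^2*\<rho> x0*\<rho>r x0 = 0"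
    using E[OF x0] hc by (auto simp: x0_def)
  have E1r': "\<rho>rt x0 + ur x0*\<rho>r x0 + u x0*\<rho>rr x0 + \<rho>r x0*ur x0 + \<rho> x0*urr x0
      + real m*((\<rho>r x0*u x0 + \<rho> x0*ur x0)*\<psi> t - \<rho> x0*u x0)/(\<psi> t)^2 = 0"
    using E1r P4 x0 by (simp add: r_def)
  have E2r': "urt x0 + ur x0*ur x0 + u x0*urr x0 + c^2*(\<rho>r x0*\<rho>r x0 + \<rho> x0*\<rho>rr x0) = 0"
    using E2r U4 x0 by simp
  note K = key_alg[OF _ _ _ Ex0(1) Ex0(2) E1r' E2r' A0'] 
  have rp: "\<psi> t > 0" using r r_def by simp
  have dg1': "((\<lambda>s. ur (\<psi> s,s) + c*\<rho>r (\<psi> s,s) + real m/\<psi> s*(c*\<rho>(\<psi> s,s)*u(\<psi> s,s)/(u(\<psi> s,s)+c*\<rho>(\<psi> s,s)))) has_real_derivative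
     real m*(u x0 - c*\<rho> x0)^2*(ur x0 - c*\<rho>r x0 - real m/\<psi> t*(c*\<rho> x0*u x0/(u x0 - c*\<rho> x0)))/(2*\<psi> t*(u x0 + c*\<rho> x0))) (at t)"
    using dg1 K[OF rp] p0 q0 unfolding p_def by simp
  have "((\<lambda>s. d_r u (\<psi> s,s) + c*d_r \<rho> (\<psi> s,s) + real m/\<psi> s*(c*\<rho>(\<psi> s,s)*u(\<psi> s,s)/(u(\<psi> s,s)+c*\<rho>(\<psi> s,s)))) has_real_derivative
     real m*(u x0 - c*\<rho> x0)^2*(ur x0 - c*\<rho>r x0 - real m/\<psi> t*(c*\<rho> x0*u x0/(u x0 - c*\<rho> x0)))/(2*\<psi> t*(u x0 + c*\<rho> x0))) (at t)"
  proof (rule has_field_derivative_transform_within_open[OF dg1' open_greaterThanLessThan])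
    show "t \<in> {t-\<epsilon><..<t+\<epsilon>}" using he by simp
    fix s assume "s \<in> {t-\<epsilon><..<t+\<epsilon>}"
    then have "(\<psi> s, s) \<in> \<Omega>" using hcurve by blast
    then show "ur (\<psi> s,s) + c*\<rho>r (\<psi> s,s) + real m/\<psi> s*(c*\<rho>(\<psi> s,s)*u(\<psi> s,s)/(u(\<psi> s,s)+c*\<rho>(\<psi> s,s)))
      = d_r u (\<psi> s,s) + c*d_r \<rho> (\<psi> s,s) + real m/\<psi> s*(c*\<rho>(\<psi> s,s)*u(\<psi> s,s)/(u(\<psi> s,s)+c*\<rho>(\<psi> s,s)))"
      using dru drp by simp
  qed
  then show ?thesis using dru[OF x0] drp[OF x0] by (simp add: x0_def)
qed

lemma no_RC:
  assumes "(g has_real_derivative D) (at t)" "D > 0"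
  shows "\<not> R_to_C g t \<epsilon>"
proof
  assume h: "R_to_C g t \<epsilon>"
  obtain d where d: "d > 0" "\<forall>h>0. h < d \<longrightarrow> g (t - h) < g t"
    using DERIV_pos_inc_left[OF assms] by blast
  define h where "h = min d \<epsilon> / 2"
  have "h > 0" "h < d" "h < \<epsilon>" using d h unfolding R_to_C_def h_def by auto
  then have "g (t - h) < 0" "g (t - h) > 0" using d h unfolding R_to_C_def by auto
  then show False by simp
qed

lemma no_CR:
  assumes "(g has_real_derivative D) (at t)" "D < 0"
  shows "\<not> C_to_R g t \<epsilon>"
proof
  assume h: "C_to_R g t \<epsilon>"
  obtain d where d: "d > 0" "\<forall>h>0. h < d \<longrightarrow> g t < g (t - h)"
    using DERIV_neg_dec_left[OF assms] by blast
  define h where "h = min d \<epsilon> / 2"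
  have "h > 0" "h < d" "h < \<epsilon>" using d h unfolding C_to_R_def h_def by auto
  then have "g (t - h) > 0" "g (t - h) < 0" using d h unfolding C_to_R_def by auto
  then show False by simp
qed

lemma hh_eq:
  assumes "\<rho> x > 0"
  shows "hh K 3 \<rho> x = sqrt (K*3) * \<rho> x"
  using assms by (simp add: hh_def)

lemma d_r_hh:
  assumes hopen: "open \<Omega>" and hrho: "\<forall>x\<in>\<Omega>. \<rho> x > 0" and x: "x \<in> \<Omega>"
    and d: "(\<rho> has_derivative (\<lambda>v. A * fst v + B * snd v)) (at x)"
  shows "d_r (hh K 3 \<rho>) x = sqrt (K*3) * d_r \<rho> x"
proof -
  define U where "U = (\<lambda>s. (s, snd x)) -` \<Omega>"
  have Uo: "open U" unfolding U_def by (rule open_vimage[OF hopen]) (intro continuous_intros)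
  have xU: "fst x \<in> U" using x by (simp add: U_def)
  have "((\<lambda>s. sqrt (K*3) * \<rho> (s, snd x)) has_real_derivative sqrt (K*3) * A) (at (fst x))"
    by (rule DERIV_cmult[OF partial_r[OF d]])
  then have "((\<lambda>s. hh K 3 \<rho> (s, snd x)) has_real_derivative sqrt (K*3) * A) (at (fst x))"
  proof (rule has_field_derivative_transform_within_open[OF _ Uo xU])
    fix s assume "s \<in> U"
    then have "(s, snd x) \<in> \<Omega>" by (simp add: U_def)
    then show "sqrt (K*3) * \<rho> (s, snd x) = hh K 3 \<rho> (s, snd x)" using hh_eq hrho by simp
  qed
  then have "d_r (hh K 3 \<rho>) x = sqrt (K*3) * A" unfolding d_r_def by (rule DERIV_imp_deriv)
  then show ?thesis using d_r_eq[OF d] by simp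
qed

lemma curve_lemma:
  fixes m :: nat and K c t \<epsilon> r0 :: real and \<Omega> :: "(real \<times> real) set"
    and \<rho> u F G cc :: "real \<times> real \<Rightarrow> real" and \<psi> :: "real \<Rightarrow> real" and I :: "real set"
  assumes hm: "m \<ge> 1" and hopen: "open \<Omega>" and hr: "\<forall>x\<in>\<Omega>. fst x > 0" and hrho: "\<forall>x\<in>\<Omega>. \<rho> x > 0"
    and hs1: "smooth_on2 \<Omega> \<rho>" and hs2: "smooth_on2 \<Omega> u" and heq: "euler_radial m K 3 \<Omega> \<rho> u"
    and hc: "c^2 = 3*K"
    and hne: "\<forall>x\<in>\<Omega>. u x + c*\<rho> x \<noteq> 0 \<and> u x - c*\<rho> x \<noteq> 0"
    and hcc: "\<forall>x\<in>\<Omega>. cc x = u x + c*\<rho> x"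
    and hF: "\<forall>x\<in>\<Omega>. F x = d_r u x + c*d_r \<rho> x + real m/fst x*(c*\<rho> x*u x/(u x+c*\<rho> x))"
    and hG: "\<forall>x\<in>\<Omega>. G x = d_r u x - c*d_r \<rho> x - real m/fst x*(c*\<rho> x*u x/(u x-c*\<rho> x))"
    and he: "\<epsilon> > 0" and hch: "char_curve \<Omega> cc r0 I \<psi>" and hI: "{t-\<epsilon><..<t+\<epsilon>} \<subseteq> I"
    and F0: "F (\<psi> t, t) = 0"
  shows "((\<lambda>s. F (\<psi> s, s)) has_real_derivative
     real m*(u (\<psi> t,t) - c*\<rho> (\<psi> t,t))^2*G (\<psi> t,t)/(2*\<psi> t*(u (\<psi> t,t) + c*\<rho> (\<psi> t,t)))) (at t)"
proof -
  have hcurve: "\<forall>s\<in>{t-\<epsilon><..<t+\<epsilon>}. (\<psi> s, s) \<in> \<Omega>" using hch hI unfolding char_curve_def by blast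
  have tI: "t \<in> {t-\<epsilon><..<t+\<epsilon>}" using he by simp
  have x0: "(\<psi> t, t) \<in> \<Omega>" using hcurve tI by blast
  have "(\<psi> has_real_derivative cc (\<psi> t, t)) (at t within I)" using hch hI tI unfolding char_curve_def by blast
  then have hpsi: "(\<psi> has_real_derivative (u (\<psi> t, t) + c*\<rho> (\<psi> t, t))) (at t)"
    using at_within_open_subset[OF tI open_greaterThanLessThan hI] hcc x0 by simp
  have A0: "d_r u (\<psi> t, t) + c*d_r \<rho> (\<psi> t, t) + real m/\<psi> t*(c*\<rho>(\<psi> t,t)*u(\<psi> t,t)/(u(\<psi> t,t)+c*\<rho>(\<psi> t,t))) = 0"
    using F0 hF x0 by simp
  have D: "((\<lambda>s. d_r u (\<psi> s,s) + c*d_r \<rho> (\<psi> s,s) + real m/\<psi> s*(c*\<rho>(\<psi> s,s)*u(\<psi> s,s)/(u(\<psi> s,s)+c*\<rho>(\<psi> s,s)))) has_real_derivative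
     real m*(u (\<psi> t,t) - c*\<rho> (\<psi> t,t))^2*(d_r u (\<psi> t,t) - c*d_r \<rho> (\<psi> t,t) - real m/\<psi> t*(c*\<rho> (\<psi> t,t)*u (\<psi> t,t)/(u (\<psi> t,t) - c*\<rho> (\<psi> t,t))))/(2*\<psi> t*(u (\<psi> t,t) + c*\<rho> (\<psi> t,t)))) (at t)"
    by (rule core[OF hm hopen hr hrho hs1 hs2 heq hc hne he hcurve hpsi A0])
  have "((\<lambda>s. F (\<psi> s, s)) has_real_derivative
     real m*(u (\<psi> t,t) - c*\<rho> (\<psi> t,t))^2*(d_r u (\<psi> t,t) - c*d_r \<rho> (\<psi> t,t) - real m/\<psi> t*(c*\<rho> (\<psi> t,t)*u (\<psi> t,t)/(u (\<psi> t,t) - c*\<rho> (\<psi> t,t))))/(2*\<psi> t*(u (\<psi> t,t) + c*\<rho> (\<psi> t,t)))) (at t)"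
  proof (rule has_field_derivative_transform_within_open[OF D open_greaterThanLessThan tI])
    fix s assume "s \<in> {t-\<epsilon><..<t+\<epsilon>}"
    then have "(\<psi> s, s) \<in> \<Omega>" using hcurve by blast
    then show "d_r u (\<psi> s,s) + c*d_r \<rho> (\<psi> s,s) + real m/\<psi> s*(c*\<rho>(\<psi> s,s)*u(\<psi> s,s)/(u(\<psi> s,s)+c*\<rho>(\<psi> s,s)))
       = F (\<psi> s, s)" using hF by simp
  qed
  then show ?thesis using hG x0 by simp
qed

lemma DSIGN0: fixes M a b r B :: real
  assumes "M > 0" "a \<noteq> 0" "b > 0" "r > 0" "B > 0" shows "M*a^2*B/(2*r*b) > 0"
  using assms by (intro divide_pos_pos mult_pos_pos) auto

lemma DSIGN1: fixes M a b r B :: real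
  assumes "M > 0" "a \<noteq> 0" "b > 0" "r > 0" "B < 0" shows "M*a^2*B/(2*r*b) < 0"
  using assms by (intro divide_neg_pos mult_pos_neg mult_pos_pos) auto

lemma DSIGN2: fixes M a b r B :: real
  assumes "M > 0" "a \<noteq> 0" "b < 0" "r > 0" "B > 0" shows "M*a^2*B/(2*r*b) < 0"
  using assms by (intro divide_pos_neg mult_pos_neg mult_pos_pos) auto

lemma DSIGN3: fixes M a b r B :: real
  assumes "M > 0" "a \<noteq> 0" "b < 0" "r > 0" "B < 0" shows "M*a^2*B/(2*r*b) > 0"
  using assms by (intro divide_neg_neg mult_pos_neg mult_pos_pos mult_neg_pos) auto

theorem mainTheorem4:
  fixes m :: nat and K :: real and \<Omega> :: "(real \<times> real) set"
    and \<rho> u :: "real \<times> real \<Rightarrow> real"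
  assumes hm: "m \<in> {1, 2}"
    and hK: "K > 0"
    and hopen: "open \<Omega>"
    and hr: "\<forall>x\<in>\<Omega>. fst x > 0"
    and hrho: "\<forall>x\<in>\<Omega>. \<rho> x > 0"
    and hsmooth: "smooth_on2 \<Omega> \<rho>" "smooth_on2 \<Omega> u"
    and heq: "euler_radial m K 3 \<Omega> \<rho> u"
    and hsub: "\<forall>x\<in>\<Omega>. c1 K 3 \<rho> u x < 0 \<and> 0 < c2 K 3 \<rho> u x"
  shows
    "(\<forall>r0 I \<psi> t \<epsilon>. char_curve \<Omega> (c2 K 3 \<rho> u) r0 I \<psi> \<and> {t-\<epsilon><..<t+\<epsilon>} \<subseteq> I
        \<and> beta m K 3 \<rho> u (\<psi> t, t) > 0
        \<longrightarrow> \<not> R_to_C (\<lambda>s. alpha m K 3 \<rho> u (\<psi> s, s)) t \<epsilon>)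
   \<and> (\<forall>r0 I \<psi> t \<epsilon>. char_curve \<Omega> (c2 K 3 \<rho> u) r0 I \<psi> \<and> {t-\<epsilon><..<t+\<epsilon>} \<subseteq> I
        \<and> beta m K 3 \<rho> u (\<psi> t, t) < 0
        \<longrightarrow> \<not> C_to_R (\<lambda>s. alpha m K 3 \<rho> u (\<psi> s, s)) t \<epsilon>)
   \<and> (\<forall>r0 I \<xi> t \<epsilon>. char_curve \<Omega> (c1 K 3 \<rho> u) r0 I \<xi> \<and> {t-\<epsilon><..<t+\<epsilon>} \<subseteq> I
        \<and> alpha m K 3 \<rho> u (\<xi> t, t) > 0
        \<longrightarrow> \<not> C_to_R (\<lambda>s. beta m K 3 \<rho> u (\<xi> s, s)) t \<epsilon>)
   \<and> (\<forall>r0 I \<xi> t \<epsilon>. char_curve \<Omega> (c1 K 3 \<rho> u) r0 I \<xi> \<and> {t-\<epsilon><..<t+\<epsilon>} \<subseteq> I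
        \<and> alpha m K 3 \<rho> u (\<xi> t, t) < 0
        \<longrightarrow> \<not> R_to_C (\<lambda>s. beta m K 3 \<rho> u (\<xi> s, s)) t \<epsilon>)"
  proof -
  have hm1: "m \<ge> 1" using hm by auto
  define s where "s = sqrt (K*3)"
  have s: "s > 0" using hK by (simp add: s_def)
  have s2: "s^2 = 3*K" using hK by (simp add: s_def)
  obtain \<rho>r \<rho>t \<rho>rr \<rho>rt \<rho>tr \<rho>tt where
    P1: "\<forall>x\<in>\<Omega>. (\<rho> has_derivative (\<lambda>v. \<rho>r x * fst v + \<rho>t x * snd v)) (at x)"
    and "\<forall>x\<in>\<Omega>. (\<rho>r has_derivative (\<lambda>v. \<rho>rr x * fst v + \<rho>rt x * snd v)) (at x)"
    and "\<forall>x\<in>\<Omega>. (\<rho>t has_derivative (\<lambda>v. \<rho>tr x * fst v + \<rho>tt x * snd v)) (at x)"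
    and "continuous_on \<Omega> \<rho>rt" "continuous_on \<Omega> \<rho>tr"
    by (rule smooth_extract[OF hsmooth(1)])
  have hdrh: "\<forall>x\<in>\<Omega>. d_r (hh K 3 \<rho>) x = s * d_r \<rho> x"
    using d_r_hh[OF hopen hrho _ P1[rule_format]] unfolding s_def by blast
  have hhx: "\<forall>x\<in>\<Omega>. hh K 3 \<rho> x = s * \<rho> x" using hh_eq hrho unfolding s_def by blast
  have hal: "\<forall>x\<in>\<Omega>. alpha m K 3 \<rho> u x = d_r u x + s*d_r \<rho> x + real m/fst x*(s*\<rho> x*u x/(u x+s*\<rho> x))"
    using hdrh hhx by (simp add: alpha_def c2_def)
  have hbe: "\<forall>x\<in>\<Omega>. beta m K 3 \<rho> u x = d_r u x - s*d_r \<rho> x - real m/fst x*(s*\<rho> x*u x/(u x-s*\<rho> x))"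
    using hdrh hhx by (simp add: beta_def c1_def)
  have hc2: "\<forall>x\<in>\<Omega>. c2 K 3 \<rho> u x = u x + s*\<rho> x" using hhx by (simp add: c2_def)
  have hc1: "\<forall>x\<in>\<Omega>. c1 K 3 \<rho> u x = u x + (-s)*\<rho> x" using hhx by (simp add: c1_def)
  have sub2: "\<forall>x\<in>\<Omega>. u x + s*\<rho> x > 0 \<and> u x - s*\<rho> x < 0" using hsub hhx by (simp add: c1_def c2_def)
  have ne2: "\<forall>x\<in>\<Omega>. u x + s*\<rho> x \<noteq> 0 \<and> u x - s*\<rho> x \<noteq> 0" using sub2 by force
  have ne1: "\<forall>x\<in>\<Omega>. u x + (-s)*\<rho> x \<noteq> 0 \<and> u x - (-s)*\<rho> x \<noteq> 0" using sub2 by force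
  have s2': "(-s)^2 = 3*K" using s2 by simp
  have hal1: "\<forall>x\<in>\<Omega>. beta m K 3 \<rho> u x = d_r u x + (-s)*d_r \<rho> x + real m/fst x*((-s)*\<rho> x*u x/(u x+(-s)*\<rho> x))"
    using hbe by simp
  have hbe1: "\<forall>x\<in>\<Omega>. alpha m K 3 \<rho> u x = d_r u x - (-s)*d_r \<rho> x - real m/fst x*((-s)*\<rho> x*u x/(u x-(-s)*\<rho> x))"
    using hal by simp
  note CL2 = curve_lemma[OF hm1 hopen hr hrho hsmooth heq s2 ne2 hc2 hal hbe]
  note CL1 = curve_lemma[OF hm1 hopen hr hrho hsmooth heq s2' ne1 hc1 hal1 hbe1]
  have mpos: "real m > 0" using hm1 by simp
  have chin: "(\<psi> t, t) \<in> \<Omega>" if "char_curve \<Omega> cc r0 I \<psi>" "{t-\<epsilon><..<t+\<epsilon>} \<subseteq> I" "\<epsilon> > 0"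
    for cc r0 I \<psi> t \<epsilon>
  proof -
    have "t \<in> I" using that(2,3) by auto
    then show ?thesis using that(1) unfolding char_curve_def by blast
  qed
  show ?thesis
  proof (intro conjI allI impI)
    fix r0 I \<psi> t \<epsilon>
    assume H: "char_curve \<Omega> (c2 K 3 \<rho> u) r0 I \<psi> \<and> {t - \<epsilon><..<t + \<epsilon>} \<subseteq> I \<and> 0 < beta m K 3 \<rho> u (\<psi> t, t)"
    show "\<not> R_to_C (\<lambda>s. alpha m K 3 \<rho> u (\<psi> s, s)) t \<epsilon>"
    proof
      assume RC: "R_to_C (\<lambda>s. alpha m K 3 \<rho> u (\<psi> s, s)) t \<epsilon>"
      then have e: "\<epsilon> > 0" and g0: "alpha m K 3 \<rho> u (\<psi> t, t) = 0" unfolding R_to_C_def by auto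
      have x0: "(\<psi> t, t) \<in> \<Omega>" using chin H e by blast
      have D: "real m*(u (\<psi> t,t) - s*\<rho> (\<psi> t,t))^2*beta m K 3 \<rho> u (\<psi> t,t)/(2*\<psi> t*(u (\<psi> t,t) + s*\<rho> (\<psi> t,t))) > 0"
        by (rule DSIGN0) (use H mpos sub2 x0 hr in auto)
      have der: "((\<lambda>s. alpha m K 3 \<rho> u (\<psi> s, s)) has_real_derivative real m*(u (\<psi> t,t) - s*\<rho> (\<psi> t,t))^2*beta m K 3 \<rho> u (\<psi> t,t)/(2*\<psi> t*(u (\<psi> t,t) + s*\<rho> (\<psi> t,t)))) (at t)"
        by (rule CL2) (use H e g0 in auto)
      show False using no_RC[OF der D] RC by simp
    qed
  next
    fix r0 I \<psi> t \<epsilon>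
    assume H: "char_curve \<Omega> (c2 K 3 \<rho> u) r0 I \<psi> \<and> {t - \<epsilon><..<t + \<epsilon>} \<subseteq> I \<and> beta m K 3 \<rho> u (\<psi> t, t) < 0"
    show "\<not> C_to_R (\<lambda>s. alpha m K 3 \<rho> u (\<psi> s, s)) t \<epsilon>"
    proof
      assume RC: "C_to_R (\<lambda>s. alpha m K 3 \<rho> u (\<psi> s, s)) t \<epsilon>"
      then have e: "\<epsilon> > 0" and g0: "alpha m K 3 \<rho> u (\<psi> t, t) = 0" unfolding C_to_R_def by auto
      have x0: "(\<psi> t, t) \<in> \<Omega>" using chin H e by blast
      have D: "real m*(u (\<psi> t,t) - s*\<rho> (\<psi> t,t))^2*beta m K 3 \<rho> u (\<psi> t,t)/(2*\<psi> t*(u (\<psi> t,t) + s*\<rho> (\<psi> t,t))) < 0"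
        by (rule DSIGN1) (use H mpos sub2 x0 hr in auto)
      have der: "((\<lambda>s. alpha m K 3 \<rho> u (\<psi> s, s)) has_real_derivative real m*(u (\<psi> t,t) - s*\<rho> (\<psi> t,t))^2*beta m K 3 \<rho> u (\<psi> t,t)/(2*\<psi> t*(u (\<psi> t,t) + s*\<rho> (\<psi> t,t)))) (at t)"
        by (rule CL2) (use H e g0 in auto)
      show False using no_CR[OF der D] RC by simp
    qed
  next
    fix r0 I \<xi> t \<epsilon>
    assume H: "char_curve \<Omega> (c1 K 3 \<rho> u) r0 I \<xi> \<and> {t - \<epsilon><..<t + \<epsilon>} \<subseteq> I \<and> 0 < alpha m K 3 \<rho> u (\<xi> t, t)"
    show "\<not> C_to_R (\<lambda>s. beta m K 3 \<rho> u (\<xi> s, s)) t \<epsilon>"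
    proof
      assume RC: "C_to_R (\<lambda>s. beta m K 3 \<rho> u (\<xi> s, s)) t \<epsilon>"
      then have e: "\<epsilon> > 0" and g0: "beta m K 3 \<rho> u (\<xi> t, t) = 0" unfolding C_to_R_def by auto
      have x0: "(\<xi> t, t) \<in> \<Omega>" using chin H e by blast
      have D: "real m*(u (\<xi> t,t) - (-s)*\<rho> (\<xi> t,t))^2*alpha m K 3 \<rho> u (\<xi> t,t)/(2*\<xi> t*(u (\<xi> t,t) + (-s)*\<rho> (\<xi> t,t))) < 0"
        by (rule DSIGN2) (use H mpos sub2 x0 hr in auto)
      have der: "((\<lambda>s. beta m K 3 \<rho> u (\<xi> s, s)) has_real_derivative real m*(u (\<xi> t,t) - (-s)*\<rho> (\<xi> t,t))^2*alpha m K 3 \<rho> u (\<xi> t,t)/(2*\<xi> t*(u (\<xi> t,t) + (-s)*\<rho> (\<xi> t,t)))) (at t)"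
        by (rule CL1) (use H e g0 in auto)
      show False using no_CR[OF der D] RC by simp
    qed
  next
    fix r0 I \<xi> t \<epsilon>
    assume H: "char_curve \<Omega> (c1 K 3 \<rho> u) r0 I \<xi> \<and> {t - \<epsilon><..<t + \<epsilon>} \<subseteq> I \<and> alpha m K 3 \<rho> u (\<xi> t, t) < 0"
    show "\<not> R_to_C (\<lambda>s. beta m K 3 \<rho> u (\<xi> s, s)) t \<epsilon>"
    proof
      assume RC: "R_to_C (\<lambda>s. beta m K 3 \<rho> u (\<xi> s, s)) t \<epsilon>"
      then have e: "\<epsilon> > 0" and g0: "beta m K 3 \<rho> u (\<xi> t, t) = 0" unfolding R_to_C_def by auto
      have x0: "(\<xi> t, t) \<in> \<Omega>" using chin H e by blast
      have D: "real m*(u (\<xi> t,t) - (-s)*\<rho> (\<xi> t,t))^2*alpha m K 3 \<rho> u (\<xi> t,t)/(2*\<xi> t*(u (\<xi> t,t) + (-s)*\<rho> (\<xi> t,t))) > 0"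
        by (rule DSIGN3) (use H mpos sub2 x0 hr in auto)
      have der: "((\<lambda>s. beta m K 3 \<rho> u (\<xi> s, s)) has_real_derivative real m*(u (\<xi> t,t) - (-s)*\<rho> (\<xi> t,t))^2*alpha m K 3 \<rho> u (\<xi> t,t)/(2*\<xi> t*(u (\<xi> t,t) + (-s)*\<rho> (\<xi> t,t)))) (at t)"
        by (rule CL1) (use H e g0 in auto)
      show False using no_RC[OF der D] RC by simp
    qed
  qed
qed

end
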